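(* For every poset $(S,\le)$, the free $\mathbb{B}$-module $\mathbb{B}(S,\le)$ is flat.
   Context: $\mathbb{B}=\{-\infty,0\}$ is the Boolean semifield (idempotent semiring with $\vee=\max$); $\mathbb{B}$-modules are join-semilattices with least element. $\mathbb{B}(S,\le)$ is the set of lower subsets of $S$ which are downward closures of finite subsets, under union. A $\mathbb{B}$-module $M$ is flat if the functor $-\otimes_{\mathbb{B}}M$ is exact (preserves finite limits and finite colimits). *)

theory Defs
  imports Main
begin

section \<open>B-modules = join-semilattices with least element\<close>

record 'a bmod =
  bcar  :: "'a set"
  bjoin :: "'a \<Rightarrow> 'a \<Rightarrow> 'a"
  bzero :: 'a

definition bmodule :: "'a bmod \<Rightarrow> bool" where
  "bmodule A \<longleftrightarrow>
     bzero A \<in> bcar A \<and>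
     (\<forall>x\<in>bcar A. \<forall>y\<in>bcar A. bjoin A x y \<in> bcar A) \<and>
     (\<forall>x\<in>bcar A. \<forall>y\<in>bcar A. \<forall>z\<in>bcar A. bjoin A (bjoin A x y) z = bjoin A x (bjoin A y z)) \<and>
     (\<forall>x\<in>bcar A. \<forall>y\<in>bcar A. bjoin A x y = bjoin A y x) \<and>
     (\<forall>x\<in>bcar A. bjoin A x x = x) \<and>
     (\<forall>x\<in>bcar A. bjoin A (bzero A) x = x)"

definition bhom :: "'a bmod \<Rightarrow> 'b bmod \<Rightarrow> ('a \<Rightarrow> 'b) \<Rightarrow> bool" where
  "bhom A B f \<longleftrightarrow>
     (\<forall>x\<in>bcar A. f x \<in> bcar B) \<and>
     (\<forall>x\<in>bcar A. \<forall>y\<in>bcar A. f (bjoin A x y) = bjoin B (f x) (f y)) \<and>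
     f (bzero A) = bzero B"

definition biso :: "'a bmod \<Rightarrow> 'b bmod \<Rightarrow> ('a \<Rightarrow> 'b) \<Rightarrow> bool" where
  "biso A B f \<longleftrightarrow> bhom A B f \<and> bij_betw f (bcar A) (bcar B)"

text \<open>A \<otimes> M is the free B-module (finite subsets, union) on carrier A \<times> carrier M,
  modulo the congruence generated by bilinearity relations.\<close>

definition tgens :: "'a bmod \<Rightarrow> 'm bmod \<Rightarrow> ('a \<times> 'm) set set" where
  "tgens A M = {s. finite s \<and> s \<subseteq> bcar A \<times> bcar M}"

inductive tens_rel :: "'a bmod \<Rightarrow> 'm bmod \<Rightarrow> ('a \<times> 'm) set \<Rightarrow> ('a \<times> 'm) set \<Rightarrow> bool"
  for A M where
  trefl: "s \<in> tgens A M \<Longrightarrow> tens_rel A M s s"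
| tsym: "tens_rel A M s t \<Longrightarrow> tens_rel A M t s"
| ttrans: "tens_rel A M s t \<Longrightarrow> tens_rel A M t u \<Longrightarrow> tens_rel A M s u"
| tunion: "tens_rel A M s t \<Longrightarrow> u \<in> tgens A M \<Longrightarrow> tens_rel A M (s \<union> u) (t \<union> u)"
| tleft: "a \<in> bcar A \<Longrightarrow> a' \<in> bcar A \<Longrightarrow> m \<in> bcar M \<Longrightarrow>
           tens_rel A M {(bjoin A a a', m)} {(a, m), (a', m)}"
| tright: "a \<in> bcar A \<Longrightarrow> m \<in> bcar M \<Longrightarrow> m' \<in> bcar M \<Longrightarrow>
           tens_rel A M {(a, bjoin M m m')} {(a, m), (a, m')}"
| tzl: "m \<in> bcar M \<Longrightarrow> tens_rel A M {(bzero A, m)} {}"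
| tzr: "a \<in> bcar A \<Longrightarrow> tens_rel A M {(a, bzero M)} {}"

definition tclass :: "'a bmod \<Rightarrow> 'm bmod \<Rightarrow> ('a \<times> 'm) set \<Rightarrow> ('a \<times> 'm) set set" where
  "tclass A M s = {t. tens_rel A M s t}"

definition tensor :: "'a bmod \<Rightarrow> 'm bmod \<Rightarrow> ('a \<times> 'm) set set bmod" where
  "tensor A M = \<lparr> bcar = tclass A M ` tgens A M,
                  bjoin = (\<lambda>X Y. {u. \<exists>s\<in>X. \<exists>t\<in>Y. tens_rel A M (s \<union> t) u}),
                  bzero = tclass A M {} \<rparr>"

definition tmap :: "'b bmod \<Rightarrow> 'm bmod \<Rightarrow> ('a \<Rightarrow> 'b) \<Rightarrow> ('a \<times> 'm) set set \<Rightarrow> ('b \<times> 'm) set set" where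
  "tmap B M f X = {u. \<exists>s\<in>X. tens_rel B M (map_prod f id ` s) u}"

definition btrivial :: "'a bmod \<Rightarrow> bool" where
  "btrivial A \<longleftrightarrow> (\<exists>x. bcar A = {x})"

definition prodm :: "'a bmod \<Rightarrow> 'b bmod \<Rightarrow> ('a \<times> 'b) bmod" where
  "prodm A B = \<lparr> bcar = bcar A \<times> bcar B,
                 bjoin = (\<lambda>(x, y) (x', y'). (bjoin A x x', bjoin B y y')),
                 bzero = (bzero A, bzero B) \<rparr>"

definition eqsub :: "'a bmod \<Rightarrow> ('a \<Rightarrow> 'b) \<Rightarrow> ('a \<Rightarrow> 'b) \<Rightarrow> 'a bmod" where
  "eqsub A f g = A\<lparr> bcar := {x \<in> bcar A. f x = g x} \<rparr>"

inductive coeq_rel :: "'a bmod \<Rightarrow> 'b bmod \<Rightarrow> ('a \<Rightarrow> 'b) \<Rightarrow> ('a \<Rightarrow> 'b) \<Rightarrow> 'b \<Rightarrow> 'b \<Rightarrow> bool"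
  for A B f g where
  crefl: "b \<in> bcar B \<Longrightarrow> coeq_rel A B f g b b"
| csym: "coeq_rel A B f g x y \<Longrightarrow> coeq_rel A B f g y x"
| ctrans: "coeq_rel A B f g x y \<Longrightarrow> coeq_rel A B f g y z \<Longrightarrow> coeq_rel A B f g x z"
| cjoin: "coeq_rel A B f g x y \<Longrightarrow> z \<in> bcar B \<Longrightarrow> coeq_rel A B f g (bjoin B x z) (bjoin B y z)"
| cbase: "a \<in> bcar A \<Longrightarrow> coeq_rel A B f g (f a) (g a)"

definition coeq_proj :: "'a bmod \<Rightarrow> 'b bmod \<Rightarrow> ('a \<Rightarrow> 'b) \<Rightarrow> ('a \<Rightarrow> 'b) \<Rightarrow> 'b \<Rightarrow> 'b set" where
  "coeq_proj A B f g b = {c. coeq_rel A B f g b c}"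

definition coeq :: "'a bmod \<Rightarrow> 'b bmod \<Rightarrow> ('a \<Rightarrow> 'b) \<Rightarrow> ('a \<Rightarrow> 'b) \<Rightarrow> 'b set bmod" where
  "coeq A B f g = \<lparr> bcar = coeq_proj A B f g ` bcar B,
                    bjoin = (\<lambda>X Y. {u. \<exists>x\<in>X. \<exists>y\<in>Y. coeq_rel A B f g (bjoin B x y) u}),
                    bzero = coeq_proj A B f g (bzero B) \<rparr>"

text \<open>Zero object (= terminal = initial object) is preserved.\<close>
definition pres_zero :: "'a itself \<Rightarrow> 'm bmod \<Rightarrow> bool" where
  "pres_zero ta M \<longleftrightarrow> (\<forall>A :: 'a bmod. bmodule A \<and> btrivial A \<longrightarrow> btrivial (tensor A M))"

definition pres_products :: "'a itself \<Rightarrow> 'b itself \<Rightarrow> 'm bmod \<Rightarrow> bool" where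
  "pres_products ta tb M \<longleftrightarrow> (\<forall>(A :: 'a bmod) (B :: 'b bmod). bmodule A \<and> bmodule B \<longrightarrow>
     biso (tensor (prodm A B) M) (prodm (tensor A M) (tensor B M))
          (\<lambda>X. (tmap A M fst X, tmap B M snd X)))"

definition pres_coproducts :: "'a itself \<Rightarrow> 'b itself \<Rightarrow> 'm bmod \<Rightarrow> bool" where
  "pres_coproducts ta tb M \<longleftrightarrow> (\<forall>(A :: 'a bmod) (B :: 'b bmod). bmodule A \<and> bmodule B \<longrightarrow>
     biso (prodm (tensor A M) (tensor B M)) (tensor (prodm A B) M)
          (\<lambda>(X, Y). bjoin (tensor (prodm A B) M)
                      (tmap (prodm A B) M (\<lambda>a. (a, bzero B)) X)
                      (tmap (prodm A B) M (\<lambda>b. (bzero A, b)) Y)))"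

definition pres_equalizers :: "'a itself \<Rightarrow> 'b itself \<Rightarrow> 'm bmod \<Rightarrow> bool" where
  "pres_equalizers ta tb M \<longleftrightarrow> (\<forall>(A :: 'a bmod) (B :: 'b bmod) f g.
     bmodule A \<and> bmodule B \<and> bhom A B f \<and> bhom A B g \<longrightarrow>
     biso (tensor (eqsub A f g) M) (eqsub (tensor A M) (tmap B M f) (tmap B M g)) (tmap A M id))"

definition pres_coequalizers :: "'a itself \<Rightarrow> 'b itself \<Rightarrow> 'm bmod \<Rightarrow> bool" where
  "pres_coequalizers ta tb M \<longleftrightarrow> (\<forall>(A :: 'a bmod) (B :: 'b bmod) f g.
     bmodule A \<and> bmodule B \<and> bhom A B f \<and> bhom A B g \<longrightarrow>
     biso (coeq (tensor A M) (tensor B M) (tmap B M f) (tmap B M g))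
          (tensor (coeq A B f g) M)
          (\<lambda>Z. \<Union>X\<in>Z. tmap (coeq A B f g) M (coeq_proj A B f g) X))"

text \<open>Flatness: \<open>- \<otimes> M\<close> preserves finite limits (terminal object, binary products,
  equalizers) and finite colimits (initial object, binary coproducts, coequalizers),
  tested on B-modules whose carriers live in the types \<open>'a\<close>, \<open>'b\<close>.
  Stating the theorem for arbitrary type variables quantifies over all B-modules.\<close>
definition bflat :: "'a itself \<Rightarrow> 'b itself \<Rightarrow> 'm bmod \<Rightarrow> bool" where
  "bflat ta tb M \<longleftrightarrow> bmodule M \<and>
     pres_zero ta M \<and>
     pres_products ta tb M \<and> pres_equalizers ta tb M \<and>
     pres_coproducts ta tb M \<and> pres_coequalizers ta tb M"

definition poset_on :: "'s set \<Rightarrow> ('s \<Rightarrow> 's \<Rightarrow> bool) \<Rightarrow> bool" where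
  "poset_on S le \<longleftrightarrow> (\<forall>x\<in>S. le x x) \<and>
     (\<forall>x\<in>S. \<forall>y\<in>S. le x y \<and> le y x \<longrightarrow> x = y) \<and>
     (\<forall>x\<in>S. \<forall>y\<in>S. \<forall>z\<in>S. le x y \<and> le y z \<longrightarrow> le x z)"

definition freeB :: "'s set \<Rightarrow> ('s \<Rightarrow> 's \<Rightarrow> bool) \<Rightarrow> 's set bmod" where
  "freeB S le = \<lparr> bcar = {D. \<exists>F. finite F \<and> F \<subseteq> S \<and> D = {x \<in> S. \<exists>y\<in>F. le x y}},
                  bjoin = (\<union>), bzero = {} \<rparr>"

end

theory Submission
  imports Defs
begin


lemma bmD:
  assumes "bmodule A"
  shows bm_zero: "bzero A \<in> bcar A"
  and bm_join: "\<And>x y. x \<in> bcar A \<Longrightarrow> y \<in> bcar A \<Longrightarrow> bjoin A x y \<in> bcar A"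
  and bm_assoc: "\<And>x y z. x \<in> bcar A \<Longrightarrow> y \<in> bcar A \<Longrightarrow> z \<in> bcar A \<Longrightarrow> bjoin A (bjoin A x y) z = bjoin A x (bjoin A y z)"
  and bm_comm: "\<And>x y. x \<in> bcar A \<Longrightarrow> y \<in> bcar A \<Longrightarrow> bjoin A x y = bjoin A y x"
  and bm_idem: "\<And>x. x \<in> bcar A \<Longrightarrow> bjoin A x x = x"
  and bm_zl: "\<And>x. x \<in> bcar A \<Longrightarrow> bjoin A (bzero A) x = x"
  and bm_zr: "\<And>x. x \<in> bcar A \<Longrightarrow> bjoin A x (bzero A) = x"
  using assms unfolding bmodule_def by metis+

definition gj :: "'a bmod \<Rightarrow> 'a \<Rightarrow> 'a \<Rightarrow> 'a" where
  "gj A x z = (if x \<in> bcar A \<and> z \<in> bcar A then bjoin A x z else z)"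

definition bsum :: "'a bmod \<Rightarrow> 'a set \<Rightarrow> 'a" where
  "bsum A X = Finite_Set.fold (gj A) (bzero A) X"

lemma gj_idem: assumes A: "bmodule A" shows "comp_fun_idem_on (bcar A) (gj A)"
proof
  fix x y assume xy: "x \<in> bcar A" "y \<in> bcar A"
  show "gj A y \<circ> gj A x = gj A x \<circ> gj A y"
  proof
    fix z
    show "(gj A y \<circ> gj A x) z = (gj A x \<circ> gj A y) z"
    proof (cases "z \<in> bcar A")
      case True
      have "bjoin A y (bjoin A x z) = bjoin A (bjoin A y x) z" using bm_assoc[OF A xy(2) xy(1) True] by simp
      also have "\<dots> = bjoin A (bjoin A x y) z" using bm_comm[OF A xy] by simp
      also have "\<dots> = bjoin A x (bjoin A y z)" using bm_assoc[OF A xy(1) xy(2) True] by simp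
      finally show ?thesis using True xy bm_join[OF A] by (simp add: gj_def)
    qed (simp add: gj_def)
  qed
next
  fix x assume x: "x \<in> bcar A"
  show "gj A x \<circ> gj A x = gj A x"
  proof
    fix z
    show "(gj A x \<circ> gj A x) z = gj A x z"
    proof (cases "z \<in> bcar A")
      case True
      have "bjoin A x (bjoin A x z) = bjoin A x z" using bm_assoc[OF A x x True] bm_idem[OF A x] by simp
      then show ?thesis using True x bm_join[OF A] by (simp add: gj_def)
    qed (simp add: gj_def)
  qed
qed

lemma bsum_empty[simp]: "bsum A {} = bzero A"
  by (simp add: bsum_def)

lemma bsum_in_ins:
  assumes "bmodule A" "finite X" "X \<subseteq> bcar A"
  shows "bsum A X \<in> bcar A \<and> (\<forall>a \<in> bcar A. bsum A (insert a X) = bjoin A a (bsum A X))"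
  using assms(2,3)
proof (induction X rule: finite_induct)
  case empty
  interpret comp_fun_idem_on "bcar A" "gj A" using gj_idem assms(1) .
  show ?case using assms(1) by (auto simp: bsum_def gj_def bm_zero)
next
  case (insert x F)
  interpret comp_fun_idem_on "bcar A" "gj A" using gj_idem assms(1) .
  have e: "bsum A (insert x F) = bjoin A x (bsum A F)"
    using insert by (simp add: bsum_def gj_def)
  have i: "bsum A (insert x F) \<in> bcar A" using e insert bm_join[OF assms(1)] by auto
  show ?case using i insert
    by (auto simp: bsum_def gj_def)
qed

lemma bsum_in: "bmodule A \<Longrightarrow> finite X \<Longrightarrow> X \<subseteq> bcar A \<Longrightarrow> bsum A X \<in> bcar A"
  using bsum_in_ins by blast

lemma bsum_insert: "bmodule A \<Longrightarrow> finite X \<Longrightarrow> X \<subseteq> bcar A \<Longrightarrow> a \<in> bcar A \<Longrightarrow>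
   bsum A (insert a X) = bjoin A a (bsum A X)"
  using bsum_in_ins by blast

lemma bsum_single: "bmodule A \<Longrightarrow> a \<in> bcar A \<Longrightarrow> bsum A {a} = a"
  using bsum_insert[of A "{}" a] by (simp add: bm_zr)

lemma bsum_union: assumes "bmodule A" "finite X" "X \<subseteq> bcar A" "finite Y" "Y \<subseteq> bcar A"
  shows "bsum A (X \<union> Y) = bjoin A (bsum A X) (bsum A Y)"
  using assms(2,3)
proof (induction X rule: finite_induct)
  case empty
  then show ?case using assms by (simp add: bm_zl bsum_in)
next
  case (insert x F)
  have "bsum A (insert x F \<union> Y) = bsum A (insert x (F \<union> Y))" by simp

  also have "\<dots> = bjoin A x (bsum A (F \<union> Y))"
    using insert assms by (intro bsum_insert) auto
  also have "\<dots> = bjoin A x (bjoin A (bsum A F) (bsum A Y))" using insert by simp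
  also have "\<dots> = bjoin A (bjoin A x (bsum A F)) (bsum A Y)"
    using insert assms by (intro bm_assoc[symmetric]) (auto intro: bsum_in)
  also have "bjoin A x (bsum A F) = bsum A (insert x F)"
    using insert assms by (intro bsum_insert[symmetric]) auto
  finally show ?case .
qed

lemma bhomD: "bhom A B h \<Longrightarrow> x \<in> bcar A \<Longrightarrow> h x \<in> bcar B"
  "bhom A B h \<Longrightarrow> x \<in> bcar A \<Longrightarrow> y \<in> bcar A \<Longrightarrow> h (bjoin A x y) = bjoin B (h x) (h y)"
  "bhom A B h \<Longrightarrow> h (bzero A) = bzero B"
  unfolding bhom_def by auto

lemma bsum_hom: assumes "bmodule A" "bmodule B" "bhom A B h" "finite X" "X \<subseteq> bcar A"
  shows "h (bsum A X) = bsum B (h ` X)"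
  using assms(4,5)
proof (induction X rule: finite_induct)
  case empty
  then show ?case using assms by (simp add: bhomD)
next
  case (insert x F)
  have xF: "x \<in> bcar A" "F \<subseteq> bcar A" using insert.prems by auto
  have hF: "h ` F \<subseteq> bcar B" "h x \<in> bcar B" using bhomD(1)[OF assms(3)] xF by auto
  have bF: "bsum A F \<in> bcar A" using bsum_in[OF assms(1) insert.hyps(1) xF(2)] .
  have "h (bsum A (insert x F)) = h (bjoin A x (bsum A F))"
    using bsum_insert[OF assms(1) insert.hyps(1) xF(2) xF(1)] by simp
  also have "\<dots> = bjoin B (h x) (h (bsum A F))"
    by (rule bhomD(2)[OF assms(3) xF(1) bF])
  also have "\<dots> = bjoin B (h x) (bsum B (h ` F))" using insert by simp
  also have "\<dots> = bsum B (insert (h x) (h ` F))"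
    by (rule bsum_insert[symmetric, OF assms(2) finite_imageI[OF insert.hyps(1)] hF(1) hF(2)])
  also have "\<dots> = bsum B (h ` insert x F)" by simp
  finally show ?case .
qed


lemma tgensI: "finite s \<Longrightarrow> s \<subseteq> bcar A \<times> bcar M \<Longrightarrow> s \<in> tgens A M"
  by (simp add: tgens_def)

lemma tgensD: "s \<in> tgens A M \<Longrightarrow> finite s" "s \<in> tgens A M \<Longrightarrow> s \<subseteq> bcar A \<times> bcar M"
  by (auto simp: tgens_def)

lemma tgens_Un: "s \<in> tgens A M \<Longrightarrow> t \<in> tgens A M \<Longrightarrow> s \<union> t \<in> tgens A M"
  by (auto simp: tgens_def)

lemma tgens_empty[simp]: "{} \<in> tgens A M"
  by (auto simp: tgens_def)

lemma tgens_insert: "insert e s \<in> tgens A M \<longleftrightarrow> e \<in> bcar A \<times> bcar M \<and> s \<in> tgens A M"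
  by (auto simp: tgens_def)

lemma rel_gens:
  assumes A: "bmodule A" and M: "bmodule M"
  shows "tens_rel A M s t \<Longrightarrow> s \<in> tgens A M \<and> t \<in> tgens A M"
proof (induction rule: tens_rel.induct)
  case (tunion s t u)
  then show ?case by (simp add: tgens_Un)
next
  case (tleft a a' m)
  then show ?case using bm_join[OF A] by (simp add: tgens_def)
next
  case (tright a m m')
  then show ?case using bm_join[OF M] by (simp add: tgens_def)
next
  case (tzl m)
  then show ?case using bm_zero[OF A] by (simp add: tgens_def)
next
  case (tzr a)
  then show ?case using bm_zero[OF M] by (simp add: tgens_def)
qed auto

lemma cong_union:
  assumes A: "bmodule A" and M: "bmodule M"
  and r1: "tens_rel A M s s'" and r2: "tens_rel A M t t'"
  shows "tens_rel A M (s \<union> t) (s' \<union> t')"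
proof -
  have g: "t \<in> tgens A M" "s' \<in> tgens A M" using rel_gens[OF A M r1] rel_gens[OF A M r2] by auto
  have 1: "tens_rel A M (s \<union> t) (s' \<union> t)" by (rule tunion[OF r1 g(1)])
  have "tens_rel A M (t \<union> s') (t' \<union> s')" by (rule tunion[OF r2 g(2)])
  then have 2: "tens_rel A M (s' \<union> t) (s' \<union> t')" by (simp add: Un_commute)
  show ?thesis by (rule ttrans[OF 1 2])
qed

lemma tclass_eq:
  assumes A: "bmodule A" and M: "bmodule M"
  and s: "s \<in> tgens A M" and t: "t \<in> tgens A M"
  shows "tclass A M s = tclass A M t \<longleftrightarrow> tens_rel A M s t"
proof
  assume "tclass A M s = tclass A M t"
  moreover have "t \<in> tclass A M t" by (simp add: tclass_def trefl t)
  ultimately show "tens_rel A M s t" by (simp add: tclass_def) blast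
next
  assume r: "tens_rel A M s t"
  show "tclass A M s = tclass A M t"
    unfolding tclass_def using r by (auto intro: ttrans tsym)
qed

lemma tclass_self: "s \<in> tgens A M \<Longrightarrow> s \<in> tclass A M s"
  by (simp add: tclass_def trefl)

lemma tclass_eqI: "tens_rel A M s t \<Longrightarrow> tclass A M s = tclass A M t"
  unfolding tclass_def by (auto intro: ttrans tsym)

lemma tensor_car: "bcar (tensor A M) = tclass A M ` tgens A M"
  by (simp add: tensor_def)

lemma tensor_zero: "bzero (tensor A M) = tclass A M {}"
  by (simp add: tensor_def)

lemma tensor_join:
  assumes A: "bmodule A" and M: "bmodule M"
  and s: "s \<in> tgens A M" and t: "t \<in> tgens A M"
  shows "bjoin (tensor A M) (tclass A M s) (tclass A M t) = tclass A M (s \<union> t)"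
proof -
  have "{u. \<exists>s'\<in>tclass A M s. \<exists>t'\<in>tclass A M t. tens_rel A M (s' \<union> t') u} = tclass A M (s \<union> t)"
  proof safe
    fix u s' t' assume "s' \<in> tclass A M s" "t' \<in> tclass A M t" "tens_rel A M (s' \<union> t') u"
    then have "tens_rel A M s s'" "tens_rel A M t t'" "tens_rel A M (s' \<union> t') u"
      by (auto simp: tclass_def)
    then have "tens_rel A M (s \<union> t) (s' \<union> t')" "tens_rel A M (s' \<union> t') u"
      using cong_union[OF A M] by auto
    then have "tens_rel A M (s \<union> t) u" by (rule ttrans)
    then show "u \<in> tclass A M (s \<union> t)" by (simp add: tclass_def)
  next
    fix u assume "u \<in> tclass A M (s \<union> t)"
    then show "\<exists>s'\<in>tclass A M s. \<exists>t'\<in>tclass A M t. tens_rel A M (s' \<union> t') u"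
      using tclass_self[OF s] tclass_self[OF t] by (auto simp: tclass_def)
  qed
  then show ?thesis by (simp add: tensor_def)
qed

lemma tensor_bmodule:
  assumes A: "bmodule A" and M: "bmodule M"
  shows "bmodule (tensor A M)"
  unfolding bmodule_def tensor_car tensor_zero
proof (intro conjI ballI)
  show "tclass A M {} \<in> tclass A M ` tgens A M" by simp
next
  fix x y assume "x \<in> tclass A M ` tgens A M" "y \<in> tclass A M ` tgens A M"
  then show "bjoin (tensor A M) x y \<in> tclass A M ` tgens A M"
    by (auto simp: tensor_join[OF A M] tgens_Un)
next
  fix x y z assume "x \<in> tclass A M ` tgens A M" "y \<in> tclass A M ` tgens A M" "z \<in> tclass A M ` tgens A M"
  then show "bjoin (tensor A M) (bjoin (tensor A M) x y) z = bjoin (tensor A M) x (bjoin (tensor A M) y z)"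
    by (auto simp: tensor_join[OF A M] tgens_Un Un_assoc)
next
  fix x y assume "x \<in> tclass A M ` tgens A M" "y \<in> tclass A M ` tgens A M"
  then show "bjoin (tensor A M) x y = bjoin (tensor A M) y x"
    by (auto simp: tensor_join[OF A M] Un_commute)
next
  fix x assume "x \<in> tclass A M ` tgens A M"
  then show "bjoin (tensor A M) x x = x"
    by (auto simp: tensor_join[OF A M])
next
  fix x assume "x \<in> tclass A M ` tgens A M"
  then show "bjoin (tensor A M) (tclass A M {}) x = x"
    by (auto simp: tensor_join[OF A M])
qed

definition hmap :: "('a \<Rightarrow> 'b) \<Rightarrow> ('a \<times> 'm) set \<Rightarrow> ('b \<times> 'm) set" where
  "hmap h s = map_prod h id ` s"

lemma hmap_simps[simp]: "hmap h {} = {}" "hmap h (s \<union> t) = hmap h s \<union> hmap h t"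
  "hmap h (insert (a, m) s) = insert (h a, m) (hmap h s)"
  by (auto simp: hmap_def)

lemma hmap_gens: "bhom A B h \<Longrightarrow> s \<in> tgens A M \<Longrightarrow> hmap h s \<in> tgens B M"
  by (auto simp: tgens_def hmap_def bhom_def)

lemma rel_map:
  assumes A: "bmodule A" and B: "bmodule B" and M: "bmodule M" and h: "bhom A B h"
  shows "tens_rel A M s t \<Longrightarrow> tens_rel B M (hmap h s) (hmap h t)"
proof (induction rule: tens_rel.induct)
  case (trefl s)
  then show ?case by (intro tens_rel.trefl hmap_gens[OF h])
next
  case (tsym s t)
  then have "tens_rel B M (hmap h s) (hmap h t)" by simp
  then show ?case by (rule tens_rel.tsym)
next
  case (ttrans s t u)
  then have "tens_rel B M (hmap h s) (hmap h t)" "tens_rel B M (hmap h t) (hmap h u)" by simp_all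
  then show ?case by (rule tens_rel.ttrans)
next
  case (tunion s t u)
  then show ?case by (simp add: tens_rel.tunion hmap_gens[OF h])
next
  case (tleft a a' m)
  then show ?case using bhomD[OF h] by (simp add: tens_rel.tleft)
next
  case (tright a m m')
  then show ?case using bhomD[OF h] by (simp add: tens_rel.tright)
next
  case (tzl m)
  then show ?case using bhomD[OF h] by (simp add: tens_rel.tzl)
next
  case (tzr a)
  then show ?case using bhomD[OF h] by (simp add: tens_rel.tzr)
qed

lemma tmap_cl:
  assumes A: "bmodule A" and B: "bmodule B" and M: "bmodule M" and h: "bhom A B h"
  and s: "s \<in> tgens A M"
  shows "tmap B M h (tclass A M s) = tclass B M (hmap h s)"
proof -
  have "{u. \<exists>s'\<in>tclass A M s. tens_rel B M (hmap h s') u} = tclass B M (hmap h s)"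
  proof safe
    fix u s' assume "s' \<in> tclass A M s" "tens_rel B M (hmap h s') u"
    then show "u \<in> tclass B M (hmap h s)"
      using rel_map[OF A B M h] by (auto simp: tclass_def intro: ttrans)
  next
    fix u assume "u \<in> tclass B M (hmap h s)"
    then show "\<exists>s'\<in>tclass A M s. tens_rel B M (hmap h s') u"
      using tclass_self[OF s] by (auto simp: tclass_def)
  qed
  then show ?thesis by (simp add: tmap_def hmap_def)
qed

lemma tmap_hom:
  assumes A: "bmodule A" and B: "bmodule B" and M: "bmodule M" and h: "bhom A B h"
  shows "bhom (tensor A M) (tensor B M) (tmap B M h)"
  unfolding bhom_def
proof (intro conjI ballI)
  fix x assume "x \<in> bcar (tensor A M)"
  then show "tmap B M h x \<in> bcar (tensor B M)"
    by (auto simp: tensor_car tmap_cl[OF A B M h] hmap_gens[OF h])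
next
  fix x y assume "x \<in> bcar (tensor A M)" "y \<in> bcar (tensor A M)"
  then show "tmap B M h (bjoin (tensor A M) x y) = bjoin (tensor B M) (tmap B M h x) (tmap B M h y)"
    by (auto simp: tensor_car tmap_cl[OF A B M h] hmap_gens[OF h] tensor_join[OF A M]
        tensor_join[OF B M] tgens_Un)
next
  show "tmap B M h (bzero (tensor A M)) = bzero (tensor B M)"
    by (simp add: tensor_zero tmap_cl[OF A B M h])
qed

lemma rel_elementwise:
  assumes A: "bmodule A" and M: "bmodule M"
  and fin: "finite s" and N: "N \<in> tgens A M"
  and each: "\<forall>e\<in>s. tens_rel A M (insert e N) N"
  shows "tens_rel A M (s \<union> N) N"
  using fin each
proof (induction s rule: finite_induct)
  case empty
  then show ?case using N by (simp add: trefl)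
next
  case (insert e F)
  have r1: "tens_rel A M (insert e N) N" using insert by simp
  have e: "{e} \<in> tgens A M" using rel_gens[OF A M r1] by (simp add: tgens_insert)
  have "tens_rel A M ({e} \<union> (F \<union> N)) ({e} \<union> N)"
    using cong_union[OF A M trefl[OF e]] insert by simp
  then show ?case using r1 by (simp add: ttrans)
qed

lemma rel_antisym:
  assumes "tens_rel A M (s \<union> t) t" "tens_rel A M (t \<union> s) s"
  shows "tens_rel A M s t"
proof -
  have "tens_rel A M (s \<union> t) s" using assms(2) by (simp add: Un_commute)
  then show ?thesis using assms(1) by (blast intro: tsym ttrans)
qed

lemma rel_decomp:
  assumes A: "bmodule A" and M: "bmodule M"
  and fin: "finite s"
  and each: "\<forall>e\<in>s. tens_rel A M {e} (r e)"
  shows "tens_rel A M s (\<Union>e\<in>s. r e)"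
  using fin each
proof (induction s rule: finite_induct)
  case empty
  then show ?case by (simp add: trefl)
next
  case (insert e F)
  have "tens_rel A M ({e} \<union> F) (r e \<union> (\<Union>e\<in>F. r e))"
    using insert by (intro cong_union[OF A M]) auto
  then show ?case by simp
qed


lemma freeB_simps[simp]: "bjoin (freeB S le) = (\<union>)" "bzero (freeB S le) = {}"
  by (simp_all add: freeB_def)

definition dH :: "'s set \<Rightarrow> ('s \<Rightarrow> 's \<Rightarrow> bool) \<Rightarrow> 's set \<Rightarrow> 's set" where
  "dH S le H = {x \<in> S. \<exists>y\<in>H. le x y}"

lemma freeB_car: "bcar (freeB S le) = {D. \<exists>F. finite F \<and> F \<subseteq> S \<and> D = dH S le F}"
  by (simp add: freeB_def dH_def)

lemma dH_empty[simp]: "dH S le {} = {}" by (simp add: dH_def)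
lemma dH_insert: "dH S le (insert h H) = dH S le {h} \<union> dH S le H" by (auto simp: dH_def)
lemma dH_Un: "dH S le (H \<union> K) = dH S le H \<union> dH S le K" by (auto simp: dH_def)
lemma dH_in: "finite H \<Longrightarrow> H \<subseteq> S \<Longrightarrow> dH S le H \<in> bcar (freeB S le)"
  by (auto simp: freeB_car)
lemma dH_sub: "dH S le H \<subseteq> S" by (auto simp: dH_def)

lemma freeB_bmodule: "bmodule (freeB S le)"
  unfolding bmodule_def freeB_simps freeB_car
proof (intro conjI ballI)
  show "{} \<in> {D. \<exists>F. finite F \<and> F \<subseteq> S \<and> D = dH S le F}"
    by (rule CollectI, rule exI[of _ "{}"]) simp
next
  fix x y assume "x \<in> {D. \<exists>F. finite F \<and> F \<subseteq> S \<and> D = dH S le F}"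
    "y \<in> {D. \<exists>F. finite F \<and> F \<subseteq> S \<and> D = dH S le F}"
  then obtain F G where "finite F" "F \<subseteq> S" "x = dH S le F" "finite G" "G \<subseteq> S" "y = dH S le G" by auto
  then show "x \<union> y \<in> {D. \<exists>F. finite F \<and> F \<subseteq> S \<and> D = dH S le F}"
    by (intro CollectI exI[of _ "F \<union> G"]) (simp add: dH_Un)
qed auto

lemma dc_sub:
  assumes P: "poset_on S le" and D: "D \<in> bcar (freeB S le)" and x: "x \<in> D"
  shows "dH S le {x} \<subseteq> D"
proof
  fix y assume y: "y \<in> dH S le {x}"
  obtain F where F: "finite F" "F \<subseteq> S" "D = dH S le F" using D by (auto simp: freeB_car)
  obtain z where z: "z \<in> F" "le x z" "x \<in> S" using x F by (auto simp: dH_def)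
  have "y \<in> S" "le y x" using y by (auto simp: dH_def)
  then have "le y z" using P z F unfolding poset_on_def by blast
  then show "y \<in> D" using F z \<open>y \<in> S\<close> by (auto simp: dH_def)
qed

definition fx :: "('a \<times> 's set) set \<Rightarrow> 's \<Rightarrow> 'a set" where
  "fx s x = fst ` {p \<in> s. x \<in> snd p}"

definition Fv :: "'a bmod \<Rightarrow> ('a \<times> 's set) set \<Rightarrow> 's \<Rightarrow> 'a" where
  "Fv A s x = bsum A (fx s x)"

lemma fx_empty[simp]: "fx {} x = {}" by (simp add: fx_def)
lemma fx_insert: "fx (insert (a, D) s) x = (if x \<in> D then insert a (fx s x) else fx s x)"
  by (auto simp: fx_def image_iff)
lemma fx_Un: "fx (s \<union> t) x = fx s x \<union> fx t x" by (auto simp: fx_def)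
lemma fx_fin: "s \<in> tgens A M \<Longrightarrow> finite (fx s x)" by (auto simp: fx_def tgens_def)
lemma fx_car: "s \<in> tgens A M \<Longrightarrow> fx s x \<subseteq> bcar A" by (auto simp: fx_def tgens_def)

lemma Fv_in: "bmodule A \<Longrightarrow> s \<in> tgens A M \<Longrightarrow> Fv A s x \<in> bcar A"
  unfolding Fv_def by (rule bsum_in[OF _ fx_fin fx_car])

lemma rel_Fv:
  assumes A: "bmodule A"
  shows "tens_rel A (freeB S le) s t \<Longrightarrow> Fv A s x = Fv A t x"
proof (induction rule: tens_rel.induct)
  case (tunion s t u)
  have g: "s \<in> tgens A (freeB S le)" "t \<in> tgens A (freeB S le)"
    using rel_gens[OF A freeB_bmodule tunion(1)] by auto
  have "Fv A (s \<union> u) x = bjoin A (Fv A s x) (Fv A u x)"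
    unfolding Fv_def fx_Un by (rule bsum_union[OF A fx_fin[OF g(1)] fx_car[OF g(1)] fx_fin[OF tunion(2)] fx_car[OF tunion(2)]])
  moreover have "Fv A (t \<union> u) x = bjoin A (Fv A t x) (Fv A u x)"
    unfolding Fv_def fx_Un by (rule bsum_union[OF A fx_fin[OF g(2)] fx_car[OF g(2)] fx_fin[OF tunion(2)] fx_car[OF tunion(2)]])
  ultimately show ?case using tunion by simp
next
  case (tleft a a' m)
  show ?case
  proof (cases "x \<in> m")
    case True
    then show ?thesis using tleft
      by (simp add: Fv_def fx_insert bsum_single[OF A] bm_join[OF A] bsum_insert[OF A] bm_zr[OF A] bm_zero[OF A])
  qed (simp add: Fv_def fx_insert)
next
  case (tright a m m')
  show ?case
  proof (cases "x \<in> m \<or> x \<in> m'")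
    case True
    then show ?thesis using tright
      by (auto simp: Fv_def fx_insert)
  qed (auto simp: Fv_def fx_insert)
next
  case (tzl m)
  then show ?case using bm_zero[OF A]
    by (simp add: Fv_def fx_insert bsum_single[OF A])
next
  case (tzr a)
  then show ?case by (simp add: Fv_def fx_insert)
qed auto


abbreviation dc :: "'s set \<Rightarrow> ('s \<Rightarrow> 's \<Rightarrow> bool) \<Rightarrow> 's \<Rightarrow> 's set" where
  "dc S le x \<equiv> dH S le {x}"

definition cover :: "'s set \<Rightarrow> ('s \<Rightarrow> 's \<Rightarrow> bool) \<Rightarrow> ('a \<times> 's set) set \<Rightarrow> 's set \<Rightarrow> bool" where
  "cover S le s G \<longleftrightarrow> (\<forall>p\<in>s. \<exists>H\<subseteq>G. snd p = dH S le H)"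

definition NF :: "'s set \<Rightarrow> ('s \<Rightarrow> 's \<Rightarrow> bool) \<Rightarrow> 'a bmod \<Rightarrow> ('a \<times> 's set) set \<Rightarrow> 's set \<Rightarrow> ('a \<times> 's set) set" where
  "NF S le A s G = (\<lambda>x. (Fv A s x, dc S le x)) ` G"

lemma cover_exists:
  assumes "s \<in> tgens A (freeB S le)"
  shows "\<exists>G. finite G \<and> G \<subseteq> S \<and> cover S le s G"
proof -
  have "finite s" "s \<subseteq> bcar A \<times> bcar (freeB S le)" using assms by (auto simp: tgens_def)
  then show ?thesis
  proof (induction s rule: finite_induct)
    case empty
    then show ?case by (auto simp: cover_def)
  next
    case (insert p F)
    then obtain G where G: "finite G" "G \<subseteq> S" "cover S le F G" by auto
    have "p \<in> bcar A \<times> bcar (freeB S le)" using insert(4) by blast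
    then have "snd p \<in> bcar (freeB S le)" by (simp add: mem_Times_iff)
    then obtain H where H: "finite H" "H \<subseteq> S" "snd p = dH S le H"
      unfolding freeB_car by blast
    have "cover S le (insert p F) (G \<union> H)"
      unfolding cover_def
    proof
      fix q assume "q \<in> insert p F"
      then show "\<exists>H'\<subseteq>G \<union> H. snd q = dH S le H'"
      proof
        assume "q = p" then show ?thesis using H(3) by auto
      next
        assume "q \<in> F"
        then obtain H' where "H' \<subseteq> G" "snd q = dH S le H'" using G(3) unfolding cover_def by auto
        then show ?thesis by auto
      qed
    qed
    then show ?case using G H by (intro exI[of _ "G \<union> H"]) simp
  qed
qed

lemma cover_mono: assumes "cover S le s G" "G \<subseteq> G'" shows "cover S le s G'"
  unfolding cover_def
proof
  fix p assume "p \<in> s"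
  then obtain H where "H \<subseteq> G" "snd p = dH S le H" using assms(1) unfolding cover_def by auto
  then show "\<exists>H\<subseteq>G'. snd p = dH S le H" using assms(2) by (intro exI[of _ H]) auto
qed

lemma dc_in: "x \<in> S \<Longrightarrow> dc S le x \<in> bcar (freeB S le)"
  by (rule dH_in) auto

lemma NF_gens:
  assumes A: "bmodule A" and s: "s \<in> tgens A (freeB S le)" and G: "finite G" "G \<subseteq> S"
  shows "NF S le A s G \<in> tgens A (freeB S le)"
  unfolding NF_def tgens_def using G Fv_in[OF A s] dc_in[of _ S le] by blast

lemma bsum_pairs:
  assumes A: "bmodule A" and D: "D \<in> bcar (freeB S le)"
  and X: "finite X" "X \<subseteq> bcar A"
  shows "tens_rel A (freeB S le) {(bsum A X, D)} ((\<lambda>a. (a, D)) ` X)"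
  using X
proof (induction X rule: finite_induct)
  case empty
  then show ?case using tzl[OF D] by simp
next
  case (insert a F)
  have aF: "a \<in> bcar A" "F \<subseteq> bcar A" using insert by auto
  have bF: "bsum A F \<in> bcar A" using bsum_in[OF A insert(1) aF(2)] .
  have 1: "tens_rel A (freeB S le) {(bsum A (insert a F), D)} ({(a, D)} \<union> {(bsum A F, D)})"
    using tleft[OF aF(1) bF D] bsum_insert[OF A insert(1) aF(2) aF(1)] by (simp add: insert_commute)
  have ad: "{(a, D)} \<in> tgens A (freeB S le)" using aF D by (simp add: tgens_def)
  have 2: "tens_rel A (freeB S le) ({(a, D)} \<union> {(bsum A F, D)}) ({(a, D)} \<union> (\<lambda>a. (a, D)) ` F)"
    by (rule cong_union[OF A freeB_bmodule trefl[OF ad]]) (use insert aF in simp)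
  show ?case using ttrans[OF 1 2] by simp
qed

lemma dH_pairs:
  assumes A: "bmodule A" and a: "a \<in> bcar A"
  and H: "finite H" "H \<subseteq> S"
  shows "tens_rel A (freeB S le) {(a, dH S le H)} ((\<lambda>h. (a, dc S le h)) ` H)"
  using H
proof (induction H rule: finite_induct)
  case empty
  then show ?case using tzr[OF a, of "freeB S le"] by simp
next
  case (insert h F)
  have hF: "h \<in> S" "F \<subseteq> S" using insert by auto
  have dF: "dH S le F \<in> bcar (freeB S le)" using dH_in[OF insert(1) hF(2)] .
  have 1: "tens_rel A (freeB S le) {(a, dH S le (insert h F))} ({(a, dc S le h)} \<union> {(a, dH S le F)})"
    using tright[OF a dc_in[OF hF(1)] dF] dH_insert[of S le h F] by (simp add: insert_commute)
  have ad: "{(a, dc S le h)} \<in> tgens A (freeB S le)" using a dc_in[OF hF(1)] by (simp add: tgens_def)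
  have 2: "tens_rel A (freeB S le) ({(a, dc S le h)} \<union> {(a, dH S le F)}) ({(a, dc S le h)} \<union> (\<lambda>h. (a, dc S le h)) ` F)"
    by (rule cong_union[OF A freeB_bmodule trefl[OF ad]]) (use insert hF in simp)
  show ?case using ttrans[OF 1 2] by simp
qed

lemma bsum_absorb:
  assumes A: "bmodule A" and X: "finite X" "X \<subseteq> bcar A" and a: "a \<in> X"
  shows "bjoin A a (bsum A X) = bsum A X"
proof -
  have "bsum A (insert a X) = bjoin A a (bsum A X)"
    using bsum_insert[OF A X] a X by auto
  moreover have "insert a X = X" using a by auto
  ultimately show ?thesis by simp
qed

lemma NF_rel:
  assumes P: "poset_on S le" and A: "bmodule A"
  and s: "s \<in> tgens A (freeB S le)" and G: "finite G" "G \<subseteq> S" and cov: "cover S le s G"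
  shows "tens_rel A (freeB S le) s (NF S le A s G)"
proof -
  let ?M = "freeB S le"
  let ?N = "NF S le A s G"
  have M: "bmodule ?M" by (rule freeB_bmodule)
  have N: "?N \<in> tgens A ?M" by (rule NF_gens[OF A s G])
  have sfin: "finite s" and scar: "s \<subseteq> bcar A \<times> bcar ?M" using s by (auto simp: tgens_def)
  have step_a: "tens_rel A ?M (insert e s) s" if e: "e \<in> ?N" for e
  proof -
    obtain x where x: "x \<in> G" "e = (Fv A s x, dc S le x)" using e by (auto simp: NF_def)
    have xS: "x \<in> S" using x G by auto
    let ?X = "fx s x"
    have X: "finite ?X" "?X \<subseteq> bcar A" using fx_fin[OF s] fx_car[OF s] by auto
    have 1: "tens_rel A ?M ({(Fv A s x, dc S le x)} \<union> s) ((\<lambda>a. (a, dc S le x)) ` ?X \<union> s)"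
      unfolding Fv_def by (rule cong_union[OF A M bsum_pairs[OF A dc_in[OF xS] X] trefl[OF s]])
    have 2: "tens_rel A ?M ((\<lambda>a. (a, dc S le x)) ` ?X \<union> s) s"
    proof (rule rel_elementwise[OF A M _ s])
      show "finite ((\<lambda>a. (a, dc S le x)) ` ?X)" using X by simp
      show "\<forall>e\<in>(\<lambda>a. (a, dc S le x)) ` ?X. tens_rel A ?M (insert e s) s"
      proof
        fix e assume "e \<in> (\<lambda>a. (a, dc S le x)) ` ?X"
        then obtain a D where aD: "(a, D) \<in> s" "x \<in> D" "e = (a, dc S le x)"
          by (auto simp: fx_def)
        have a: "a \<in> bcar A" and D: "D \<in> bcar ?M" using aD scar by auto
        have sub: "dc S le x \<union> D = D" using dc_sub[OF P D aD(2)] by auto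
        have r: "tens_rel A ?M {(a, dc S le x \<union> D)} {(a, dc S le x), (a, D)}"
          using tright[OF a dc_in[OF xS] D] by simp
        have "tens_rel A ?M ({(a, dc S le x \<union> D)} \<union> s) ({(a, dc S le x), (a, D)} \<union> s)"
          by (rule tunion[OF r s])
        moreover have "{(a, dc S le x \<union> D)} \<union> s = s" using sub aD by auto
        moreover have "{(a, dc S le x), (a, D)} \<union> s = insert e s" using aD by auto
        ultimately show "tens_rel A ?M (insert e s) s" by (simp add: tsym)
      qed
    qed
    show ?thesis using ttrans[OF 1 2] x by simp
  qed
  have Ns: "tens_rel A ?M (?N \<union> s) s"
    by (rule rel_elementwise[OF A M _ s]) (use step_a G in \<open>auto simp: NF_def\<close>)
  have step_b: "tens_rel A ?M (insert e ?N) ?N" if e: "e \<in> s" for e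
  proof -
    obtain a D where aD: "e = (a, D)" by (cases e)
    have a: "a \<in> bcar A" and D: "D \<in> bcar ?M" using aD e scar by auto
    obtain H where H: "H \<subseteq> G" "D = dH S le H" using cov e aD unfolding cover_def by force
    have Hf: "finite H" "H \<subseteq> S" using H G finite_subset by auto
    have 1: "tens_rel A ?M ({(a, D)} \<union> ?N) ((\<lambda>h. (a, dc S le h)) ` H \<union> ?N)"
      using cong_union[OF A M dH_pairs[OF A a Hf] trefl[OF N]] H by simp
    have 2: "tens_rel A ?M ((\<lambda>h. (a, dc S le h)) ` H \<union> ?N) ?N"
    proof (rule rel_elementwise[OF A M _ N])
      show "finite ((\<lambda>h. (a, dc S le h)) ` H)" using Hf by simp
      show "\<forall>e\<in>(\<lambda>h. (a, dc S le h)) ` H. tens_rel A ?M (insert e ?N) ?N"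
      proof
        fix e' assume "e' \<in> (\<lambda>h. (a, dc S le h)) ` H"
        then obtain h where h: "h \<in> H" "e' = (a, dc S le h)" by auto
        have hS: "h \<in> S" using h Hf by auto
        have hD: "h \<in> D" using H h hS P unfolding dH_def poset_on_def by auto
        have aX: "a \<in> fx s h" using aD e hD unfolding fx_def by force
        have X: "finite (fx s h)" "fx s h \<subseteq> bcar A" using fx_fin[OF s] fx_car[OF s] by auto
        have ab: "bjoin A a (Fv A s h) = Fv A s h"
          unfolding Fv_def by (rule bsum_absorb[OF A X aX])
        have r: "tens_rel A ?M {(bjoin A a (Fv A s h), dc S le h)} {(a, dc S le h), (Fv A s h, dc S le h)}"
          by (rule tleft[OF a Fv_in[OF A s] dc_in[OF hS]])
        have "tens_rel A ?M ({(bjoin A a (Fv A s h), dc S le h)} \<union> ?N) ({(a, dc S le h), (Fv A s h, dc S le h)} \<union> ?N)"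
          by (rule tunion[OF r N])
        moreover have "(Fv A s h, dc S le h) \<in> ?N" using h H by (auto simp: NF_def)
        ultimately have "tens_rel A ?M ?N (insert e' ?N)" using ab h
          by (simp add: insert_absorb)
        then show "tens_rel A ?M (insert e' ?N) ?N" by (rule tsym)
      qed
    qed
    show ?thesis using ttrans[OF 1 2] aD by simp
  qed
  have sN: "tens_rel A ?M (s \<union> ?N) ?N"
    by (rule rel_elementwise[OF A M sfin N]) (use step_b in auto)
  show ?thesis by (rule rel_antisym[OF sN]) (use Ns in \<open>simp add: Un_commute\<close>)
qed

lemma complete:
  assumes P: "poset_on S le" and A: "bmodule A"
  and s: "s \<in> tgens A (freeB S le)" and t: "t \<in> tgens A (freeB S le)"
  and eq: "\<And>x. x \<in> S \<Longrightarrow> Fv A s x = Fv A t x"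
  shows "tens_rel A (freeB S le) s t"
proof -
  obtain G1 where G1: "finite G1" "G1 \<subseteq> S" "cover S le s G1" using cover_exists[OF s] by auto
  obtain G2 where G2: "finite G2" "G2 \<subseteq> S" "cover S le t G2" using cover_exists[OF t] by auto
  let ?G = "G1 \<union> G2"
  have G: "finite ?G" "?G \<subseteq> S" using G1 G2 by auto
  have 1: "tens_rel A (freeB S le) s (NF S le A s ?G)"
    by (rule NF_rel[OF P A s G cover_mono[OF G1(3)]]) auto
  have 2: "tens_rel A (freeB S le) t (NF S le A t ?G)"
    by (rule NF_rel[OF P A t G cover_mono[OF G2(3)]]) auto
  have "NF S le A s ?G = NF S le A t ?G"
    unfolding NF_def by (rule image_cong[OF refl]) (use G eq in auto)
  moreover have "tens_rel A (freeB S le) (NF S le A t ?G) t" by (rule tsym[OF 2])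
  ultimately have "tens_rel A (freeB S le) (NF S le A s ?G) t" by simp
  then show ?thesis by (rule ttrans[OF 1])
qed


lemma prodm_simps[simp]: "bcar (prodm A B) = bcar A \<times> bcar B"
  "bjoin (prodm A B) (x, y) (x', y') = (bjoin A x x', bjoin B y y')"
  "bzero (prodm A B) = (bzero A, bzero B)"
  by (simp_all add: prodm_def)

lemma prodm_bmodule: assumes A: "bmodule A" and B: "bmodule B" shows "bmodule (prodm A B)"
  unfolding bmodule_def
  by (auto simp: bm_zero[OF A] bm_zero[OF B] bm_join[OF A] bm_join[OF B] bm_assoc[OF A] bm_assoc[OF B]
     bm_idem[OF A] bm_idem[OF B] bm_zl[OF A] bm_zl[OF B] intro: bm_comm[OF A] bm_comm[OF B])

lemma hom_fst: "bhom (prodm A B) A fst" by (auto simp: bhom_def)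
lemma hom_snd: "bhom (prodm A B) B snd" by (auto simp: bhom_def)
lemma hom_i1: "bmodule B \<Longrightarrow> bhom A (prodm A B) (\<lambda>a. (a, bzero B))"
  by (auto simp: bhom_def bm_zero bm_idem)
lemma hom_i2: "bmodule A \<Longrightarrow> bhom B (prodm A B) (\<lambda>b. (bzero A, b))"
  by (auto simp: bhom_def bm_zero bm_idem)

theorem zero_ok:
  assumes M: "bmodule M"
  shows "pres_zero TYPE('a) M"
  unfolding pres_zero_def
proof (intro allI impI)
  fix A :: "'a bmod" assume H: "bmodule A \<and> btrivial A"
  then have A: "bmodule A" by simp
  obtain z where z: "bcar A = {z}" using H by (auto simp: btrivial_def)
  have zz: "z = bzero A" using bm_zero[OF A] z by auto
  have eq: "tclass A M s = tclass A M {}" if s: "s \<in> tgens A M" for s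
  proof -
    have "tens_rel A M s (\<Union>e\<in>s. {})"
    proof (rule rel_decomp[OF A M])
      show "finite s" using s by (simp add: tgens_def)
      show "\<forall>e\<in>s. tens_rel A M {e} {}"
      proof
        fix e assume e: "e \<in> s"
        obtain a m where am: "e = (a, m)" by (cases e)
        have "(a, m) \<in> bcar A \<times> bcar M" using e am tgensD(2)[OF s] by blast
        then have "a = bzero A" "m \<in> bcar M" using z zz by auto
        then show "tens_rel A M {e} {}" using am tzl[of m M A] by simp
      qed
    qed
    then have "tens_rel A M s {}" by simp
    then show ?thesis by (rule tclass_eqI)
  qed
  have "bcar (tensor A M) = {tclass A M {}}" unfolding tensor_car
  proof (intro equalityI subsetI)
    fix x assume "x \<in> tclass A M ` tgens A M"
    then obtain s where s: "s \<in> tgens A M" "x = tclass A M s" by blast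
    have "x = tclass A M {}" using s(2) eq[OF s(1)] by (rule trans)
    then show "x \<in> {tclass A M {}}" by simp
  next
    fix x assume "x \<in> {tclass A M {}}"
    then show "x \<in> tclass A M ` tgens A M" using tgens_empty by blast
  qed
  then show "btrivial (tensor A M)" by (simp add: btrivial_def)
qed

context
  fixes A :: "'a bmod" and B :: "'b bmod" and M :: "'m bmod"
  assumes A: "bmodule A" and B: "bmodule B" and M: "bmodule M"
begin

abbreviation "P \<equiv> prodm A B"
abbreviation "i1 \<equiv> (\<lambda>a. (a, bzero B))"
abbreviation "i2 \<equiv> (\<lambda>b. (bzero A, b))"

lemma Pm: "bmodule P" by (rule prodm_bmodule[OF A B])

lemma split_rel:
  assumes s: "s \<in> tgens P M"
  shows "tens_rel P M s (hmap i1 (hmap fst s) \<union> hmap i2 (hmap snd s))"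
proof -
  let ?r = "\<lambda>e::(('a \<times> 'b) \<times> 'm). {((fst (fst e), bzero B), snd e), ((bzero A, snd (fst e)), snd e)}"
  have "tens_rel P M s (\<Union>e\<in>s. ?r e)"
  proof (rule rel_decomp[OF Pm M])
    show "finite s" using s by (simp add: tgens_def)
    show "\<forall>e\<in>s. tens_rel P M {e} (?r e)"
    proof
      fix e assume e: "e \<in> s"
      obtain a b m where abm: "e = ((a, b), m)" by (metis prod.collapse)
      have c: "a \<in> bcar A" "b \<in> bcar B" "m \<in> bcar M" using e s abm by (auto simp: tgens_def)
      have "tens_rel P M {(bjoin P (a, bzero B) (bzero A, b), m)} {((a, bzero B), m), ((bzero A, b), m)}"
        by (rule tleft) (use c bm_zero[OF A] bm_zero[OF B] in auto)
      moreover have "bjoin P (a, bzero B) (bzero A, b) = (a, b)"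
        using c by (simp add: bm_zr[OF A] bm_zl[OF B])
      ultimately show "tens_rel P M {e} (?r e)" using abm by simp
    qed
  qed
  moreover have "(\<Union>e\<in>s. ?r e) = (\<lambda>e. ((fst (fst e), bzero B), snd e)) ` s \<union> (\<lambda>e. ((bzero A, snd (fst e)), snd e)) ` s"
    by auto
  moreover have "hmap i1 (hmap fst s) = (\<lambda>e. ((fst (fst e), bzero B), snd e)) ` s"
    unfolding hmap_def image_image by (intro image_cong refl) (simp add: map_prod_def split_beta)
  moreover have "hmap i2 (hmap snd s) = (\<lambda>e. ((bzero A, snd (fst e)), snd e)) ` s"
    unfolding hmap_def image_image by (intro image_cong refl) (simp add: map_prod_def split_beta)
  ultimately show ?thesis by simp
qed

lemma zero_pairs:
  assumes C: "bmodule C" and s: "s \<in> tgens D M"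
  shows "tens_rel C M (hmap (\<lambda>_. bzero C) s) {}"
proof -
  have "tens_rel C M (hmap (\<lambda>_. bzero C) s) (\<Union>e\<in>hmap (\<lambda>_. bzero C) s. {})"
  proof (rule rel_decomp[OF C M])
    show "finite (hmap (\<lambda>_. bzero C) s)" using s by (simp add: tgens_def hmap_def)
    show "\<forall>e\<in>hmap (\<lambda>_. bzero C) s. tens_rel C M {e} {}"
    proof
      fix e assume "e \<in> hmap (\<lambda>_. bzero C) s"
      then obtain a m where am: "(a, m) \<in> s" "e = (bzero C, m)" by (auto simp: hmap_def)
      have "m \<in> bcar M" using am(1) tgensD(2)[OF s] by blast
      then show "tens_rel C M {e} {}" using am(2) tzl[of m M C] by simp
    qed
  qed
  then show ?thesis by simp
qed

lemma fst_back:
  assumes r1: "r1 \<in> tgens A M" and r2: "r2 \<in> tgens B M"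
  shows "tens_rel A M (hmap fst (hmap i1 r1 \<union> hmap i2 r2)) r1"
proof -
  have e: "hmap fst (hmap i1 r1 \<union> hmap i2 r2) = r1 \<union> hmap (\<lambda>_. bzero A) r2"
    by (force simp: hmap_def image_iff)
  have "tens_rel A M (r1 \<union> hmap (\<lambda>_. bzero A) r2) (r1 \<union> {})"
    by (rule cong_union[OF A M trefl[OF r1] zero_pairs[OF A r2]])
  then show ?thesis using e by simp
qed

lemma snd_back:
  assumes r1: "r1 \<in> tgens A M" and r2: "r2 \<in> tgens B M"
  shows "tens_rel B M (hmap snd (hmap i1 r1 \<union> hmap i2 r2)) r2"
proof -
  have e: "hmap snd (hmap i1 r1 \<union> hmap i2 r2) = r2 \<union> hmap (\<lambda>_. bzero B) r1"
    by (force simp: hmap_def image_iff)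
  have "tens_rel B M (r2 \<union> hmap (\<lambda>_. bzero B) r1) (r2 \<union> {})"
    by (rule cong_union[OF B M trefl[OF r2] zero_pairs[OF B r1]])
  then show ?thesis using e by simp
qed

definition Phi where "Phi = (\<lambda>X. (tmap A M fst X, tmap B M snd X))"
definition Psi where "Psi = (\<lambda>(X, Y). bjoin (tensor P M) (tmap P M i1 X) (tmap P M i2 Y))"

lemma Phi_cl: "s \<in> tgens P M \<Longrightarrow> Phi (tclass P M s) = (tclass A M (hmap fst s), tclass B M (hmap snd s))"
  unfolding Phi_def by (simp add: tmap_cl[OF Pm A M hom_fst] tmap_cl[OF Pm B M hom_snd])

lemma Psi_cl: "r1 \<in> tgens A M \<Longrightarrow> r2 \<in> tgens B M \<Longrightarrow>
    Psi (tclass A M r1, tclass B M r2) = tclass P M (hmap i1 r1 \<union> hmap i2 r2)"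
  unfolding Psi_def
  by (simp add: tmap_cl[OF A Pm M hom_i1[OF B]] tmap_cl[OF B Pm M hom_i2[OF A]]
       tensor_join[OF Pm M] hmap_gens[OF hom_i1[OF B]] hmap_gens[OF hom_i2[OF A]])

lemma gens_i: "r1 \<in> tgens A M \<Longrightarrow> r2 \<in> tgens B M \<Longrightarrow> hmap i1 r1 \<union> hmap i2 r2 \<in> tgens P M"
  by (intro tgens_Un hmap_gens[OF hom_i1[OF B]] hmap_gens[OF hom_i2[OF A]])

lemma PsiPhi: "s \<in> tgens P M \<Longrightarrow> Psi (Phi (tclass P M s)) = tclass P M s"
  by (simp add: Phi_cl Psi_cl hmap_gens[OF hom_fst] hmap_gens[OF hom_snd])
    (metis split_rel tclass_eqI tsym)

lemma PhiPsi: "r1 \<in> tgens A M \<Longrightarrow> r2 \<in> tgens B M \<Longrightarrow>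
   Phi (Psi (tclass A M r1, tclass B M r2)) = (tclass A M r1, tclass B M r2)"
proof -
  assume r: "r1 \<in> tgens A M" "r2 \<in> tgens B M"
  have "Phi (Psi (tclass A M r1, tclass B M r2)) = (tclass A M (hmap fst (hmap i1 r1 \<union> hmap i2 r2)), tclass B M (hmap snd (hmap i1 r1 \<union> hmap i2 r2)))"
    using r by (simp only: Psi_cl Phi_cl gens_i)
  also have "\<dots> = (tclass A M r1, tclass B M r2)"
    using tclass_eqI[OF fst_back[OF r]] tclass_eqI[OF snd_back[OF r]] by simp
  finally show ?thesis .
qed

lemma Phi_hom: "bhom (tensor P M) (prodm (tensor A M) (tensor B M)) Phi"
  using tmap_hom[OF Pm A M hom_fst] tmap_hom[OF Pm B M hom_snd]
  unfolding bhom_def Phi_def by auto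

lemma Psi_hom: "bhom (prodm (tensor A M) (tensor B M)) (tensor P M) Psi"
  unfolding bhom_def
proof (intro conjI ballI)
  fix x assume "x \<in> bcar (prodm (tensor A M) (tensor B M))"
  then obtain r1 r2 where "r1 \<in> tgens A M" "r2 \<in> tgens B M" "x = (tclass A M r1, tclass B M r2)"
    by (auto simp: tensor_car)
  then show "Psi x \<in> bcar (tensor P M)" by (simp add: Psi_cl tensor_car gens_i)
next
  fix x y assume "x \<in> bcar (prodm (tensor A M) (tensor B M))" "y \<in> bcar (prodm (tensor A M) (tensor B M))"
  then obtain r1 r2 q1 q2 where r: "r1 \<in> tgens A M" "r2 \<in> tgens B M" "x = (tclass A M r1, tclass B M r2)"
    and q: "q1 \<in> tgens A M" "q2 \<in> tgens B M" "y = (tclass A M q1, tclass B M q2)"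
    by (auto simp: tensor_car)
  have "hmap i1 (r1 \<union> q1) \<union> hmap i2 (r2 \<union> q2) = (hmap i1 r1 \<union> hmap i2 r2) \<union> (hmap i1 q1 \<union> hmap i2 q2)"
    by auto
  then show "Psi (bjoin (prodm (tensor A M) (tensor B M)) x y) = bjoin (tensor P M) (Psi x) (Psi y)"
    using r q by (simp add: tensor_join[OF A M] tensor_join[OF B M] tensor_join[OF Pm M] Psi_cl gens_i tgens_Un)
next
  show "Psi (bzero (prodm (tensor A M) (tensor B M))) = bzero (tensor P M)"
    by (simp add: tensor_zero Psi_cl)
qed

lemma Phi_bij: "bij_betw Phi (bcar (tensor P M)) (bcar (prodm (tensor A M) (tensor B M)))"
proof (rule bij_betw_byWitness[where f'=Psi])
  show "\<forall>a\<in>bcar (tensor P M). Psi (Phi a) = a" by (auto simp: tensor_car PsiPhi)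
  show "\<forall>a'\<in>bcar (prodm (tensor A M) (tensor B M)). Phi (Psi a') = a'" by (auto simp: tensor_car PhiPsi)
  show "Phi ` bcar (tensor P M) \<subseteq> bcar (prodm (tensor A M) (tensor B M))"
    using Phi_hom by (auto simp: bhom_def)
  show "Psi ` bcar (prodm (tensor A M) (tensor B M)) \<subseteq> bcar (tensor P M)"
    using Psi_hom by (auto simp: bhom_def)
qed

lemma Psi_bij: "bij_betw Psi (bcar (prodm (tensor A M) (tensor B M))) (bcar (tensor P M))"
proof (rule bij_betw_byWitness[where f'=Phi])
  show "\<forall>a\<in>bcar (tensor P M). Psi (Phi a) = a" by (auto simp: tensor_car PsiPhi)
  show "\<forall>a'\<in>bcar (prodm (tensor A M) (tensor B M)). Phi (Psi a') = a'" by (auto simp: tensor_car PhiPsi)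
  show "Phi ` bcar (tensor P M) \<subseteq> bcar (prodm (tensor A M) (tensor B M))"
    using Phi_hom by (auto simp: bhom_def)
  show "Psi ` bcar (prodm (tensor A M) (tensor B M)) \<subseteq> bcar (tensor P M)"
    using Psi_hom by (auto simp: bhom_def)
qed

lemma prod_iso: "biso (tensor (prodm A B) M) (prodm (tensor A M) (tensor B M))
          (\<lambda>X. (tmap A M fst X, tmap B M snd X))"
  using Phi_hom Phi_bij unfolding biso_def Phi_def by simp

lemma coprod_iso: "biso (prodm (tensor A M) (tensor B M)) (tensor (prodm A B) M)
          (\<lambda>(X, Y). bjoin (tensor (prodm A B) M)
                      (tmap (prodm A B) M (\<lambda>a. (a, bzero B)) X)
                      (tmap (prodm A B) M (\<lambda>b. (bzero A, b)) Y))"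
  using Psi_hom Psi_bij unfolding biso_def Psi_def by simp

end

theorem products_ok: "bmodule M \<Longrightarrow> pres_products TYPE('a) TYPE('b) M"
  unfolding pres_products_def using prod_iso by blast

theorem coproducts_ok: "bmodule M \<Longrightarrow> pres_coproducts TYPE('a) TYPE('b) M"
  unfolding pres_coproducts_def using coprod_iso by blast


lemma eqsub_simps[simp]: "bcar (eqsub A f g) = {x \<in> bcar A. f x = g x}"
  "bjoin (eqsub A f g) = bjoin A" "bzero (eqsub A f g) = bzero A"
  by (simp_all add: eqsub_def)

lemma eqsub_bmodule:
  assumes A: "bmodule A" and f: "bhom A B f" and g: "bhom A B g"
  shows "bmodule (eqsub A f g)"
  unfolding bmodule_def eqsub_simps
  using A f g unfolding bmodule_def bhom_def by auto

lemma incl_hom: "bhom (eqsub A f g) A id"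
  by (simp add: bhom_def)

lemma bsum_eqsub:
  assumes A: "bmodule A" and f: "bhom A B f" and g: "bhom A B g"
  and X: "finite X" "X \<subseteq> bcar (eqsub A f g)"
  shows "bsum (eqsub A f g) X = bsum A X"
  using X
proof (induction X rule: finite_induct)
  case empty
  then show ?case by simp
next
  case (insert x F)
  have E: "bmodule (eqsub A f g)" by (rule eqsub_bmodule[OF A f g])
  have 1: "bsum (eqsub A f g) (insert x F) = bjoin A x (bsum (eqsub A f g) F)"
    using bsum_insert[OF E insert(1)] insert(4) by simp
  have 2: "bsum A (insert x F) = bjoin A x (bsum A F)"
    using bsum_insert[OF A insert(1)] insert(4) by auto
  show ?case using 1 2 insert by simp
qed

lemma fx_hmap: "fx (hmap h s) x = h ` fx s x"
  by (force simp: fx_def hmap_def image_iff)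

lemma Fv_hmap:
  assumes A: "bmodule A" and B: "bmodule B" and h: "bhom A B h" and s: "s \<in> tgens A M"
  shows "Fv B (hmap h s) x = h (Fv A s x)"
  unfolding Fv_def fx_hmap by (rule bsum_hom[OF A B h fx_fin[OF s] fx_car[OF s], symmetric])

lemma hmap_id[simp]: "hmap id s = s" by (simp add: hmap_def map_prod.id)

context
  fixes A :: "'a bmod" and B :: "'b bmod" and f g :: "'a \<Rightarrow> 'b" and S :: "'s set" and le
  assumes A: "bmodule A" and B: "bmodule B" and f: "bhom A B f" and g: "bhom A B g"
    and P: "poset_on S le"
begin

abbreviation "E \<equiv> eqsub A f g"
abbreviation "MM \<equiv> freeB S le"

lemma Em: "bmodule E" by (rule eqsub_bmodule[OF A f g])
lemma Mm: "bmodule MM" by (rule freeB_bmodule)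

lemma gensE: "s \<in> tgens E MM \<Longrightarrow> s \<in> tgens A MM"
  by (auto simp: tgens_def)

lemma hmap_fg: "s \<in> tgens E MM \<Longrightarrow> hmap f s = hmap g s"
  unfolding hmap_def tgens_def by (force simp: image_iff)

lemma EPhi_cl: "s \<in> tgens E MM \<Longrightarrow> tmap A MM id (tclass E MM s) = tclass A MM s"
  using tmap_cl[OF Em A Mm incl_hom] by simp

lemma eq_hom: "bhom (tensor E MM) (eqsub (tensor A MM) (tmap B MM f) (tmap B MM g)) (tmap A MM id)"
  unfolding bhom_def
proof (intro conjI ballI)
  fix x assume "x \<in> bcar (tensor E MM)"
  then obtain s where s: "s \<in> tgens E MM" "x = tclass E MM s" by (auto simp: tensor_car)
  have "tmap B MM f (tclass A MM s) = tmap B MM g (tclass A MM s)"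
    using tmap_cl[OF A B Mm f gensE[OF s(1)]] tmap_cl[OF A B Mm g gensE[OF s(1)]] hmap_fg[OF s(1)] by simp
  then show "tmap A MM id x \<in> bcar (eqsub (tensor A MM) (tmap B MM f) (tmap B MM g))"
    using s gensE[OF s(1)] by (simp add: EPhi_cl tensor_car)
next
  fix x y assume "x \<in> bcar (tensor E MM)" "y \<in> bcar (tensor E MM)"
  then obtain s t where s: "s \<in> tgens E MM" "x = tclass E MM s" and t: "t \<in> tgens E MM" "y = tclass E MM t"
    by (auto simp: tensor_car)
  show "tmap A MM id (bjoin (tensor E MM) x y) = bjoin (eqsub (tensor A MM) (tmap B MM f) (tmap B MM g)) (tmap A MM id x) (tmap A MM id y)"
    using s t by (simp add: tensor_join[OF Em Mm] tensor_join[OF A Mm] EPhi_cl tgens_Un gensE)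
next
  show "tmap A MM id (bzero (tensor E MM)) = bzero (eqsub (tensor A MM) (tmap B MM f) (tmap B MM g))"
    by (simp add: tensor_zero EPhi_cl)
qed

lemma FvE: "s \<in> tgens E MM \<Longrightarrow> Fv E s x = Fv A s x"
  unfolding Fv_def by (rule bsum_eqsub[OF A f g fx_fin fx_car])

lemma eq_inj: "inj_on (tmap A MM id) (bcar (tensor E MM))"
proof (rule inj_onI)
  fix x y assume "x \<in> bcar (tensor E MM)" "y \<in> bcar (tensor E MM)" and eq: "tmap A MM id x = tmap A MM id y"
  then obtain s t where s: "s \<in> tgens E MM" "x = tclass E MM s" and t: "t \<in> tgens E MM" "y = tclass E MM t"
    by (auto simp: tensor_car)
  have "tclass A MM s = tclass A MM t" using eq s t by (simp add: EPhi_cl)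
  then have "tens_rel A MM s t" using tclass_eq[OF A Mm gensE[OF s(1)] gensE[OF t(1)]] by simp
  then have "\<And>z. Fv A s z = Fv A t z" by (rule rel_Fv[OF A])
  then have "\<And>z. Fv E s z = Fv E t z" using FvE s t by simp
  then have "tens_rel E MM s t" by (intro complete[OF P Em s(1) t(1)])
  then show "x = y" using s t by (simp add: tclass_eqI)
qed

lemma eq_surj: "tmap A MM id ` bcar (tensor E MM) = bcar (eqsub (tensor A MM) (tmap B MM f) (tmap B MM g))"
proof
  show "tmap A MM id ` bcar (tensor E MM) \<subseteq> bcar (eqsub (tensor A MM) (tmap B MM f) (tmap B MM g))"
    using eq_hom by (auto simp: bhom_def)
next
  show "bcar (eqsub (tensor A MM) (tmap B MM f) (tmap B MM g)) \<subseteq> tmap A MM id ` bcar (tensor E MM)"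
  proof
    fix X assume X: "X \<in> bcar (eqsub (tensor A MM) (tmap B MM f) (tmap B MM g))"
    then obtain s where s: "s \<in> tgens A MM" "X = tclass A MM s" and
      e: "tmap B MM f X = tmap B MM g X" by (auto simp: tensor_car)
    have "tclass B MM (hmap f s) = tclass B MM (hmap g s)"
      using e s tmap_cl[OF A B Mm f s(1)] tmap_cl[OF A B Mm g s(1)] by simp
    then have "tens_rel B MM (hmap f s) (hmap g s)"
      using tclass_eq[OF B Mm hmap_gens[OF f s(1)] hmap_gens[OF g s(1)]] by simp
    then have "\<And>z. Fv B (hmap f s) z = Fv B (hmap g s) z" by (rule rel_Fv[OF B])
    then have fg: "\<And>z. f (Fv A s z) = g (Fv A s z)"
      using Fv_hmap[OF A B f s(1)] Fv_hmap[OF A B g s(1)] by simp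
    obtain G where G: "finite G" "G \<subseteq> S" "cover S le s G" using cover_exists[OF s(1)] by auto
    let ?N = "NF S le A s G"
    have N: "?N \<in> tgens A MM" by (rule NF_gens[OF A s(1) G(1,2)])
    have NE: "?N \<in> tgens E MM"
      using N fg Fv_in[OF A s(1)] unfolding tgens_def NF_def by auto
    have "tens_rel A MM s ?N" by (rule NF_rel[OF P A s(1) G])
    then have "X = tmap A MM id (tclass E MM ?N)"
      using s NE by (simp add: EPhi_cl tclass_eqI)
    moreover have "tclass E MM ?N \<in> bcar (tensor E MM)" using NE by (simp add: tensor_car)
    ultimately show "X \<in> tmap A MM id ` bcar (tensor E MM)" by blast
  qed
qed

lemma eq_iso: "biso (tensor (eqsub A f g) MM) (eqsub (tensor A MM) (tmap B MM f) (tmap B MM g)) (tmap A MM id)"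
  unfolding biso_def bij_betw_def using eq_hom eq_inj eq_surj by simp

end

theorem equalizers_ok: "poset_on S le \<Longrightarrow> pres_equalizers TYPE('a) TYPE('b) (freeB S le)"
  unfolding pres_equalizers_def using eq_iso by blast


lemma coeq_simps[simp]: "bcar (coeq A B f g) = coeq_proj A B f g ` bcar B"
  "bzero (coeq A B f g) = coeq_proj A B f g (bzero B)"
  "bjoin (coeq A B f g) X Y = {u. \<exists>x\<in>X. \<exists>y\<in>Y. coeq_rel A B f g (bjoin B x y) u}"
  by (simp_all add: coeq_def)

context
  fixes A :: "'a bmod" and B :: "'b bmod" and f g :: "'a \<Rightarrow> 'b"
  assumes B: "bmodule B" and f: "bhom A B f" and g: "bhom A B g"
begin

lemma c_car: "coeq_rel A B f g x y \<Longrightarrow> x \<in> bcar B \<and> y \<in> bcar B"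
proof (induction rule: coeq_rel.induct)
  case (cjoin x y z)
  then show ?case using bm_join[OF B] by auto
next
  case (cbase a)
  then show ?case using bhomD(1)[OF f] bhomD(1)[OF g] by auto
qed auto

lemma c_proj_eq: "coeq_rel A B f g x y \<Longrightarrow> coeq_proj A B f g x = coeq_proj A B f g y"
  unfolding coeq_proj_def by (auto intro: ctrans csym)

lemma c_proj_eqD: "y \<in> bcar B \<Longrightarrow> coeq_proj A B f g x = coeq_proj A B f g y \<Longrightarrow> coeq_rel A B f g x y"
  unfolding coeq_proj_def using crefl[of y B A f g] by blast

lemma c_cong: "coeq_rel A B f g x x' \<Longrightarrow> coeq_rel A B f g y y' \<Longrightarrow>
    coeq_rel A B f g (bjoin B x y) (bjoin B x' y')"
proof -
  assume 1: "coeq_rel A B f g x x'" and 2: "coeq_rel A B f g y y'"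
  have c: "x \<in> bcar B" "x' \<in> bcar B" "y \<in> bcar B" "y' \<in> bcar B" using c_car[OF 1] c_car[OF 2] by auto
  have a: "coeq_rel A B f g (bjoin B x y) (bjoin B x' y)" by (rule cjoin[OF 1 c(3)])
  have "coeq_rel A B f g (bjoin B y x') (bjoin B y' x')" by (rule cjoin[OF 2 c(2)])
  then have b: "coeq_rel A B f g (bjoin B x' y) (bjoin B x' y')"
    using bm_comm[OF B c(2) c(3)] bm_comm[OF B c(2) c(4)] by simp
  show ?thesis by (rule ctrans[OF a b])
qed

lemma c_join: "b \<in> bcar B \<Longrightarrow> b' \<in> bcar B \<Longrightarrow>
   bjoin (coeq A B f g) (coeq_proj A B f g b) (coeq_proj A B f g b') = coeq_proj A B f g (bjoin B b b')"
proof -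
  assume b: "b \<in> bcar B" and b': "b' \<in> bcar B"
  show ?thesis
    unfolding coeq_simps
  proof (intro equalityI subsetI)
    fix u assume "u \<in> {u. \<exists>x\<in>coeq_proj A B f g b. \<exists>y\<in>coeq_proj A B f g b'. coeq_rel A B f g (bjoin B x y) u}"
    then obtain x y where "coeq_rel A B f g b x" "coeq_rel A B f g b' y" "coeq_rel A B f g (bjoin B x y) u"
      by (auto simp: coeq_proj_def)
    then have "coeq_rel A B f g (bjoin B b b') u" by (meson c_cong ctrans)
    then show "u \<in> coeq_proj A B f g (bjoin B b b')" by (simp add: coeq_proj_def)
  next
    fix u assume "u \<in> coeq_proj A B f g (bjoin B b b')"
    then show "u \<in> {u. \<exists>x\<in>coeq_proj A B f g b. \<exists>y\<in>coeq_proj A B f g b'. coeq_rel A B f g (bjoin B x y) u}"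
      using b b' by (auto simp: coeq_proj_def intro: crefl)
  qed
qed

lemma c_bmodule: "bmodule (coeq A B f g)"
  unfolding bmodule_def coeq_simps(1,2)
proof (intro conjI ballI)
  show "coeq_proj A B f g (bzero B) \<in> coeq_proj A B f g ` bcar B" using bm_zero[OF B] by simp
next
  fix x y assume "x \<in> coeq_proj A B f g ` bcar B" "y \<in> coeq_proj A B f g ` bcar B"
  then obtain a b where "a \<in> bcar B" "b \<in> bcar B" "x = coeq_proj A B f g a" "y = coeq_proj A B f g b" by auto
  then show "bjoin (coeq A B f g) x y \<in> coeq_proj A B f g ` bcar B"
    using c_join bm_join[OF B] by simp
next
  fix x y z assume "x \<in> coeq_proj A B f g ` bcar B" "y \<in> coeq_proj A B f g ` bcar B" "z \<in> coeq_proj A B f g ` bcar B"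
  then obtain a b c where "a \<in> bcar B" "b \<in> bcar B" "c \<in> bcar B" "x = coeq_proj A B f g a"
    "y = coeq_proj A B f g b" "z = coeq_proj A B f g c" by auto
  then show "bjoin (coeq A B f g) (bjoin (coeq A B f g) x y) z = bjoin (coeq A B f g) x (bjoin (coeq A B f g) y z)"
    using c_join bm_join[OF B] bm_assoc[OF B] by simp
next
  fix x y assume "x \<in> coeq_proj A B f g ` bcar B" "y \<in> coeq_proj A B f g ` bcar B"
  then obtain a b where "a \<in> bcar B" "b \<in> bcar B" "x = coeq_proj A B f g a" "y = coeq_proj A B f g b" by auto
  then show "bjoin (coeq A B f g) x y = bjoin (coeq A B f g) y x"
    using c_join bm_comm[OF B] by simp
next
  fix x assume "x \<in> coeq_proj A B f g ` bcar B"
  then obtain a where "a \<in> bcar B" "x = coeq_proj A B f g a" by auto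
  then show "bjoin (coeq A B f g) x x = x"
    using c_join bm_idem[OF B] by simp
next
  fix x assume "x \<in> coeq_proj A B f g ` bcar B"
  then obtain a where "a \<in> bcar B" "x = coeq_proj A B f g a" by auto
  then show "bjoin (coeq A B f g) (coeq_proj A B f g (bzero B)) x = x"
    using c_join bm_zl[OF B] bm_zero[OF B] by simp
qed

lemma c_hom: "bhom B (coeq A B f g) (coeq_proj A B f g)"
  unfolding bhom_def using c_join by simp

lemma c_base: "a \<in> bcar A \<Longrightarrow> coeq_proj A B f g (f a) = coeq_proj A B f g (g a)"
  by (rule c_proj_eq[OF cbase])

end


context
  fixes A :: "'a bmod" and B :: "'b bmod" and f g :: "'a \<Rightarrow> 'b" and S :: "'s set" and le
  assumes A: "bmodule A" and B: "bmodule B" and f: "bhom A B f" and g: "bhom A B g"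
    and P: "poset_on S le"
begin

abbreviation "Q \<equiv> coeq A B f g"
abbreviation "pr \<equiv> coeq_proj A B f g"
abbreviation "M2 \<equiv> freeB S le"
abbreviation "TA \<equiv> tensor A M2"
abbreviation "TB \<equiv> tensor B M2"
abbreviation "tf \<equiv> tmap B M2 f"
abbreviation "tg \<equiv> tmap B M2 g"
abbreviation "R' \<equiv> coeq_rel TA TB tf tg"
abbreviation "psi \<equiv> tmap Q M2 pr"

lemma Mm2: "bmodule M2" by (rule freeB_bmodule)
lemma Qm: "bmodule Q" by (rule c_bmodule[OF B f g])
lemma prh: "bhom B Q pr" by (rule c_hom[OF B f g])
lemma TAm: "bmodule TA" by (rule tensor_bmodule[OF A Mm2])
lemma TBm: "bmodule TB" by (rule tensor_bmodule[OF B Mm2])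
lemma tfh: "bhom TA TB tf" by (rule tmap_hom[OF A B Mm2 f])
lemma tgh: "bhom TA TB tg" by (rule tmap_hom[OF A B Mm2 g])
lemma psih: "bhom TB (tensor Q M2) psi" by (rule tmap_hom[OF B Qm Mm2 prh])

lemma psi_cl: "s \<in> tgens B M2 \<Longrightarrow> psi (tclass B M2 s) = tclass Q M2 (hmap pr s)"
  by (rule tmap_cl[OF B Qm Mm2 prh])

lemma hmap_pr_fg: "r \<in> tgens A M2 \<Longrightarrow> hmap pr (hmap f r) = hmap pr (hmap g r)"
proof -
  assume r: "r \<in> tgens A M2"
  have "\<And>a m. (a, m) \<in> r \<Longrightarrow> pr (f a) = pr (g a)"
    using r c_base[OF B f g] by (auto simp: tgens_def)
  then show ?thesis unfolding hmap_def image_image by (intro image_cong refl) (auto simp: map_prod_def split_beta)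
qed

lemma psi_R': "R' X Y \<Longrightarrow> psi X = psi Y"
proof (induction rule: coeq_rel.induct)
  case (cjoin x y z)
  have c: "x \<in> bcar TB" "y \<in> bcar TB" using c_car[OF TBm tfh tgh cjoin(1)] by auto
  show ?case using cjoin bhomD(2)[OF psih c(1) cjoin(2)] bhomD(2)[OF psih c(2) cjoin(2)] by simp
next
  case (cbase a)
  then obtain r where r: "r \<in> tgens A M2" "a = tclass A M2 r" by (auto simp: tensor_car)
  show ?case using r
    by (simp add: tmap_cl[OF A B Mm2 f] tmap_cl[OF A B Mm2 g] psi_cl hmap_gens[OF f] hmap_gens[OF g] hmap_pr_fg)
qed auto

lemma Phi_proj: "X \<in> bcar TB \<Longrightarrow> (\<Union>Y\<in>coeq_proj TA TB tf tg X. psi Y) = psi X"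
proof -
  assume X: "X \<in> bcar TB"
  have "X \<in> coeq_proj TA TB tf tg X" using crefl[OF X] by (simp add: coeq_proj_def)
  moreover have "\<And>Y. Y \<in> coeq_proj TA TB tf tg X \<Longrightarrow> psi Y = psi X"
  proof -
    fix Y assume "Y \<in> coeq_proj TA TB tf tg X"
    then have "R' X Y" by (simp add: coeq_proj_def)
    then show "psi Y = psi X" using psi_R' by simp
  qed
  ultimately show ?thesis by blast
qed

definition PhiC where "PhiC = (\<lambda>Z. \<Union>X\<in>Z. psi X)"

lemma PhiC_proj: "X \<in> bcar TB \<Longrightarrow> PhiC (coeq_proj TA TB tf tg X) = psi X"
  unfolding PhiC_def by (rule Phi_proj)

lemma PhiC_hom: "bhom (coeq TA TB tf tg) (tensor Q M2) PhiC"
  unfolding bhom_def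
proof (intro conjI ballI)
  fix Z assume "Z \<in> bcar (coeq TA TB tf tg)"
  then obtain X where X: "X \<in> bcar TB" "Z = coeq_proj TA TB tf tg X" by auto
  then show "PhiC Z \<in> bcar (tensor Q M2)" using PhiC_proj bhomD(1)[OF psih] by simp
next
  fix Z1 Z2 assume "Z1 \<in> bcar (coeq TA TB tf tg)" "Z2 \<in> bcar (coeq TA TB tf tg)"
  then obtain X1 X2 where X: "X1 \<in> bcar TB" "Z1 = coeq_proj TA TB tf tg X1"
    "X2 \<in> bcar TB" "Z2 = coeq_proj TA TB tf tg X2" by auto
  have "bjoin (coeq TA TB tf tg) Z1 Z2 = coeq_proj TA TB tf tg (bjoin TB X1 X2)"
    using X c_join[OF TBm tfh tgh] by simp
  then show "PhiC (bjoin (coeq TA TB tf tg) Z1 Z2) = bjoin (tensor Q M2) (PhiC Z1) (PhiC Z2)"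
    using X PhiC_proj bm_join[OF TBm] bhomD(2)[OF psih] by simp
next
  show "PhiC (bzero (coeq TA TB tf tg)) = bzero (tensor Q M2)"
    using PhiC_proj[OF bm_zero[OF TBm]] bhomD(3)[OF psih] by simp
qed

lemma single_R':
  assumes D: "D \<in> bcar M2"
  shows "coeq_rel A B f g b b' \<Longrightarrow> R' (tclass B M2 {(b, D)}) (tclass B M2 {(b', D)})"
proof (induction rule: coeq_rel.induct)
  case (crefl b)
  have "{(b, D)} \<in> tgens B M2" using crefl D by (simp add: tgens_def)
  then show ?case by (intro coeq_rel.crefl) (simp add: tensor_car)
next
  case (csym x y)
  from csym.IH show ?case by (rule coeq_rel.csym)
next
  case (ctrans x y z)
  from ctrans.IH show ?case by (rule coeq_rel.ctrans)
next
  case (cjoin x y z)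
  have c: "x \<in> bcar B" "y \<in> bcar B" using c_car[OF B f g cjoin(1)] by auto
  have gx: "{(x, D)} \<in> tgens B M2" "{(y, D)} \<in> tgens B M2" "{(z, D)} \<in> tgens B M2"
    using c cjoin(2) D by (simp_all add: tgens_def)
  have ex: "tclass B M2 {(bjoin B x z, D)} = bjoin TB (tclass B M2 {(x, D)}) (tclass B M2 {(z, D)})"
    using tclass_eqI[OF tleft[OF c(1) cjoin(2) D]] tensor_join[OF B Mm2 gx(1) gx(3)] by (simp add: insert_commute)
  have ey: "tclass B M2 {(bjoin B y z, D)} = bjoin TB (tclass B M2 {(y, D)}) (tclass B M2 {(z, D)})"
    using tclass_eqI[OF tleft[OF c(2) cjoin(2) D]] tensor_join[OF B Mm2 gx(2) gx(3)] by (simp add: insert_commute)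
  have "tclass B M2 {(z, D)} \<in> bcar TB" using gx by (simp add: tensor_car)
  then show ?case using coeq_rel.cjoin[OF cjoin(3)] ex ey by simp
next
  case (cbase a)
  have ga: "{(a, D)} \<in> tgens A M2" using cbase D by (simp add: tgens_def)
  have "R' (tf (tclass A M2 {(a, D)})) (tg (tclass A M2 {(a, D)}))"
    by (rule coeq_rel.cbase) (use ga in \<open>simp add: tensor_car\<close>)
  then show ?case using tmap_cl[OF A B Mm2 f ga] tmap_cl[OF A B Mm2 g ga] by simp
qed

lemma img_R':
  assumes G: "finite G" "G \<subseteq> S"
  and h: "\<And>x. x \<in> G \<Longrightarrow> coeq_rel A B f g (h1 x) (h2 x)"
  shows "R' (tclass B M2 ((\<lambda>x. (h1 x, dc S le x)) ` G)) (tclass B M2 ((\<lambda>x. (h2 x, dc S le x)) ` G))"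
  using G h
proof (induction G rule: finite_induct)
  case empty
  have "R' (tclass B M2 {}) (tclass B M2 {})" by (rule coeq_rel.crefl) (simp add: tensor_car)
  then show ?case by simp
next
  case (insert x F)
  have xS: "x \<in> S" using insert by auto
  have r1: "R' (tclass B M2 {(h1 x, dc S le x)}) (tclass B M2 {(h2 x, dc S le x)})"
    by (rule single_R'[OF dc_in[OF xS]]) (use insert in auto)
  have r2: "R' (tclass B M2 ((\<lambda>x. (h1 x, dc S le x)) ` F)) (tclass B M2 ((\<lambda>x. (h2 x, dc S le x)) ` F))"
    using insert by auto
  have c1: "h1 x \<in> bcar B" "h2 x \<in> bcar B" using c_car[OF B f g insert(5)] by auto
  have gens: "\<And>h. (\<forall>y\<in>insert x F. h y \<in> bcar B) \<Longrightarrow> (\<lambda>x. (h x, dc S le x)) ` F \<in> tgens B M2 \<and> {(h x, dc S le x)} \<in> tgens B M2"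
    using insert dc_in[of _ S le] by (auto simp: tgens_def)
  have hc: "\<forall>y\<in>insert x F. h1 y \<in> bcar B" "\<forall>y\<in>insert x F. h2 y \<in> bcar B"
    using c_car[OF B f g] insert(5) by blast+
  have e1: "tclass B M2 ((\<lambda>x. (h1 x, dc S le x)) ` insert x F) = bjoin TB (tclass B M2 {(h1 x, dc S le x)}) (tclass B M2 ((\<lambda>x. (h1 x, dc S le x)) ` F))"
    using tensor_join[OF B Mm2] gens[OF hc(1)] by simp
  have e2: "tclass B M2 ((\<lambda>x. (h2 x, dc S le x)) ` insert x F) = bjoin TB (tclass B M2 {(h2 x, dc S le x)}) (tclass B M2 ((\<lambda>x. (h2 x, dc S le x)) ` F))"
    using tensor_join[OF B Mm2] gens[OF hc(2)] by simp
  show ?case unfolding e1 e2 by (rule c_cong[OF TBm tfh tgh r1 r2])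
qed

lemma PhiC_inj: "inj_on PhiC (bcar (coeq TA TB tf tg))"
proof (rule inj_onI)
  fix Z1 Z2 assume "Z1 \<in> bcar (coeq TA TB tf tg)" "Z2 \<in> bcar (coeq TA TB tf tg)" and eq: "PhiC Z1 = PhiC Z2"
  then obtain s t where s: "s \<in> tgens B M2" "Z1 = coeq_proj TA TB tf tg (tclass B M2 s)"
    and t: "t \<in> tgens B M2" "Z2 = coeq_proj TA TB tf tg (tclass B M2 t)"
    by (auto simp: tensor_car)
  have "tclass Q M2 (hmap pr s) = tclass Q M2 (hmap pr t)"
    using eq s t PhiC_proj psi_cl by (simp add: tensor_car)
  then have "tens_rel Q M2 (hmap pr s) (hmap pr t)"
    using tclass_eq[OF Qm Mm2 hmap_gens[OF prh s(1)] hmap_gens[OF prh t(1)]] by simp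
  then have "\<And>z. Fv Q (hmap pr s) z = Fv Q (hmap pr t) z" by (rule rel_Fv[OF Qm])
  then have "\<And>z. pr (Fv B s z) = pr (Fv B t z)"
    using Fv_hmap[OF B Qm prh s(1)] Fv_hmap[OF B Qm prh t(1)] by simp
  then have rz: "\<And>z. coeq_rel A B f g (Fv B s z) (Fv B t z)"
    using c_proj_eqD[OF B f g Fv_in[OF B t(1)]] by blast
  obtain G1 where G1: "finite G1" "G1 \<subseteq> S" "cover S le s G1" using cover_exists[OF s(1)] by auto
  obtain G2 where G2: "finite G2" "G2 \<subseteq> S" "cover S le t G2" using cover_exists[OF t(1)] by auto
  let ?G = "G1 \<union> G2"
  have G: "finite ?G" "?G \<subseteq> S" using G1 G2 by auto
  have 1: "tens_rel B M2 s (NF S le B s ?G)"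
    by (rule NF_rel[OF P B s(1) G cover_mono[OF G1(3)]]) auto
  have 2: "tens_rel B M2 t (NF S le B t ?G)"
    by (rule NF_rel[OF P B t(1) G cover_mono[OF G2(3)]]) auto
  have "R' (tclass B M2 (NF S le B s ?G)) (tclass B M2 (NF S le B t ?G))"
    unfolding NF_def by (rule img_R'[OF G rz])
  then have "R' (tclass B M2 s) (tclass B M2 t)"
    using tclass_eqI[OF 1] tclass_eqI[OF 2] by simp
  then show "Z1 = Z2" using s t c_proj_eq[OF TBm tfh tgh] by simp
qed

definition lift where "lift q = (SOME b. b \<in> bcar B \<and> pr b = q)"

lemma lift: "q \<in> bcar Q \<Longrightarrow> lift q \<in> bcar B \<and> pr (lift q) = q"
  unfolding lift_def by (rule someI_ex) auto

lemma PhiC_surj: "PhiC ` bcar (coeq TA TB tf tg) = bcar (tensor Q M2)"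
proof
  show "PhiC ` bcar (coeq TA TB tf tg) \<subseteq> bcar (tensor Q M2)"
    using PhiC_hom by (auto simp: bhom_def)
next
  show "bcar (tensor Q M2) \<subseteq> PhiC ` bcar (coeq TA TB tf tg)"
  proof
    fix Y assume "Y \<in> bcar (tensor Q M2)"
    then obtain r where r: "r \<in> tgens Q M2" "Y = tclass Q M2 r" by (auto simp: tensor_car)
    let ?s = "hmap lift r"
    have rc: "\<And>q m. (q, m) \<in> r \<Longrightarrow> q \<in> bcar Q \<and> m \<in> bcar M2" using r by (auto simp: tgens_def)
    have s: "?s \<in> tgens B M2" using r lift rc by (auto simp: tgens_def hmap_def)
    have "hmap pr ?s = r"
    proof -
      have "hmap pr ?s = (\<lambda>p. (pr (lift (fst p)), snd p)) ` r"
        unfolding hmap_def image_image by (intro image_cong refl) (simp add: map_prod_def split_beta)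
      also have "\<dots> = (\<lambda>p. p) ` r"
        using lift rc by (intro image_cong refl) (metis prod.collapse)
      finally show ?thesis by simp
    qed
    then have "Y = PhiC (coeq_proj TA TB tf tg (tclass B M2 ?s))"
      using r s PhiC_proj psi_cl by (simp add: tensor_car)
    moreover have "coeq_proj TA TB tf tg (tclass B M2 ?s) \<in> bcar (coeq TA TB tf tg)"
      using s by (simp add: tensor_car)
    ultimately show "Y \<in> PhiC ` bcar (coeq TA TB tf tg)" by blast
  qed
qed

lemma coeq_iso: "biso (coeq (tensor A M2) (tensor B M2) (tmap B M2 f) (tmap B M2 g))
          (tensor (coeq A B f g) M2)
          (\<lambda>Z. \<Union>X\<in>Z. tmap (coeq A B f g) M2 (coeq_proj A B f g) X)"
  using PhiC_hom PhiC_inj PhiC_surj unfolding biso_def bij_betw_def PhiC_def by simp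

end

theorem coequalizers_ok: "poset_on S le \<Longrightarrow> pres_coequalizers TYPE('a) TYPE('b) (freeB S le)"
  unfolding pres_coequalizers_def using coeq_iso by blast


theorem mainTheorem10:
  fixes S :: "'s set" and le :: "'s \<Rightarrow> 's \<Rightarrow> bool"
  assumes "poset_on S le"
  shows "bflat TYPE('a) TYPE('b) (freeB S le)"
  unfolding bflat_def
proof (intro conjI)
  show "bmodule (freeB S le)" by (rule freeB_bmodule)
  show "pres_zero TYPE('a) (freeB S le)" by (rule zero_ok[OF freeB_bmodule])
  show "pres_products TYPE('a) TYPE('b) (freeB S le)" by (rule products_ok[OF freeB_bmodule])
  show "pres_equalizers TYPE('a) TYPE('b) (freeB S le)" by (rule equalizers_ok[OF assms])
  show "pres_coproducts TYPE('a) TYPE('b) (freeB S le)" by (rule coproducts_ok[OF freeB_bmodule])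
  show "pres_coequalizers TYPE('a) TYPE('b) (freeB S le)" by (rule coequalizers_ok[OF assms])
qed

end
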